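(* Let $I$ be a compact interval and $f:I\to\mathcal{K}(\mathbb{R})$ a continuous set-valued function such that $\dim_A(\mathcal{G}(f))>1$. Then $\dim_A\Delta(\mathcal{G}(f))=1$.
   Context: $\mathcal{K}(\mathbb{R})$: non-empty compact subsets of $\mathbb{R}$ with the Hausdorff distance. $\mathcal{G}(f)=\{(x,y)\in I\times\mathbb{R}:y\in f(x)\}\subseteq\mathbb{R}^2$, and $\Delta(\mathcal{G}(f))=\{|x-x_*|+|y-y_*|:x,x_*\in I,\ y\in f(x),\ y_*\in f(x_* )\}$. $\dim_A$ denotes Assouad dimension. *)

theory Defs
  imports "HOL-Analysis.Analysis"
begin

definition hausdorff_dist :: "'a::metric_space set \<Rightarrow> 'a set \<Rightarrow> real" where
  "hausdorff_dist A B = max (SUP a\<in>A. infdist a B) (SUP b\<in>B. infdist b A)"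

definition hausdorff_continuous_on :: "real set \<Rightarrow> (real \<Rightarrow> real set) \<Rightarrow> bool" where
  "hausdorff_continuous_on I f \<longleftrightarrow>
     (\<forall>x\<in>I. \<forall>e>0. \<exists>d>0. \<forall>y\<in>I. \<bar>y - x\<bar> < d \<longrightarrow> hausdorff_dist (f y) (f x) < e)"

definition assouad_dim :: "'a::euclidean_space set \<Rightarrow> real" where
  "assouad_dim F = Inf {s. s \<ge> 0 \<and> (\<exists>C>0. \<forall>x\<in>F. \<forall>R r. 0 < r \<longrightarrow> r < R \<longrightarrow>
      (\<exists>A. finite A \<and> F \<inter> ball x R \<subseteq> (\<Union>a\<in>A. cball a r) \<and>
           real (card A) \<le> C * (R / r) powr s))}"

definition graph_sv :: "real set \<Rightarrow> (real \<Rightarrow> real set) \<Rightarrow> (real \<times> real) set" where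
  "graph_sv I f = {(x, y). x \<in> I \<and> y \<in> f x}"

definition l1_distance_set :: "(real \<times> real) set \<Rightarrow> real set" where
  "l1_distance_set G = {\<bar>x - x'\<bar> + \<bar>y - y'\<bar> | x y x' y'. (x, y) \<in> G \<and> (x', y') \<in> G}"

end

theory Submission imports Defs begin

lemma cover_interval:
  fixes c R r :: real
  assumes "0 < r" "r < R"
  shows "\<exists>A. finite A \<and> ball c R \<subseteq> (\<Union>a\<in>A. cball a r) \<and> real (card A) \<le> 2 * (R / r)"
proof -
  define n where "n = nat (ceiling (R / r))"
  define A where "A = (\<lambda>k::nat. c - R + r + 2 * r * real k) ` {..<n}"
  have fin: "finite A" unfolding A_def by simp
  have "real (card A) \<le> real n" unfolding A_def
    using card_image_le[of "{..<n}"] by (metis card_lessThan finite_lessThan of_nat_le_iff)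
  also have "real n \<le> R / r + 1" unfolding n_def
    using assms by (simp add: of_nat_nat)
  also have "\<dots> \<le> 2 * (R / r)" using assms by (simp add: field_simps)
  finally have card: "real (card A) \<le> 2 * (R / r)" .
  have cov: "ball c R \<subseteq> (\<Union>a\<in>A. cball a r)"
  proof
    fix t assume "t \<in> ball c R"
    then have t: "c - R < t" "t < c + R" by (auto simp: dist_real_def)
    define v where "v = (t - (c - R)) / (2 * r)"
    have v0: "0 \<le> v" using t assms by (simp add: v_def)
    have vlt: "v < R / r"
    proof -
      have "t - (c - R) < 2 * R" using t by simp
      then have "v < (2 * R) / (2 * r)" unfolding v_def using assms by (intro divide_strict_right_mono) auto
      then show ?thesis using assms by simp
    qed
    define k where "k = nat (floor v)"
    have kv: "real k \<le> v" "v < real k + 1" using v0 by (simp_all add: k_def)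
    have "real n \<ge> R / r"
    proof -
      have "R / r > 0" using assms by simp
      then have "ceiling (R/r) \<ge> 0" by linarith
      then have "real n = of_int (ceiling (R/r))" by (simp add: n_def)
      then show ?thesis by simp
    qed
    then have "real k < real n" using kv vlt by linarith
    then have "k < n" by simp
    moreover have "dist t (c - R + r + 2 * r * real k) \<le> r"
    proof -
      have "t - (c - R) = 2 * r * v" using assms by (simp add: v_def)
      then show ?thesis
      proof -
        have "2 * r * real k \<le> 2 * r * v" "2 * r * v < 2 * r * (real k + 1)" using kv assms by auto
        then show ?thesis using \<open>t - (c - R) = 2 * r * v\<close> unfolding dist_real_def by (simp add: algebra_simps)
      qed
    qed
    ultimately show "t \<in> (\<Union>a\<in>A. cball a r)" unfolding A_def
      by (auto simp: dist_commute)
  qed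
  show ?thesis using fin cov card by blast
qed

lemma assouad_le1:
  fixes F :: "'a::euclidean_space set"
  assumes H: "\<And>x R r. x \<in> F \<Longrightarrow> 0 < r \<Longrightarrow> r < R \<Longrightarrow>
     \<exists>A. finite A \<and> F \<inter> ball x R \<subseteq> (\<Union>a\<in>A. cball a r) \<and> real (card A) \<le> 2 * (R / r)"
  shows "assouad_dim F \<le> 1"
proof -
  let ?S = "{s. s \<ge> 0 \<and> (\<exists>C>0. \<forall>x\<in>F. \<forall>R r. 0 < r \<longrightarrow> r < R \<longrightarrow>
      (\<exists>A. finite A \<and> F \<inter> ball x R \<subseteq> (\<Union>a\<in>A. cball a r) \<and>
           real (card A) \<le> C * (R / r) powr s))}"
  have "(1::real) \<in> ?S"
  proof -
    have "\<forall>x\<in>F. \<forall>R r. 0 < r \<longrightarrow> r < R \<longrightarrow>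
      (\<exists>A. finite A \<and> F \<inter> ball x R \<subseteq> (\<Union>a\<in>A. cball a r) \<and>
           real (card A) \<le> 2 * (R / r) powr 1)"
    proof (intro ballI allI impI)
      fix x R r assume "x \<in> F" "0 < (r::real)" "r < R"
      moreover have "(R / r) powr 1 = R / r" using \<open>0 < r\<close> \<open>r < R\<close> by simp
      ultimately show "\<exists>A. finite A \<and> F \<inter> ball x R \<subseteq> (\<Union>a\<in>A. cball a r) \<and>
           real (card A) \<le> 2 * (R / r) powr 1" using H by presburger
    qed
    then show ?thesis by (intro CollectI conjI) (auto intro!: exI[of _ 2])
  qed
  moreover have "bdd_below ?S" by (rule bdd_belowI[of _ 0]) auto
  ultimately show ?thesis unfolding assouad_dim_def by (rule cInf_lower)
qed

lemma assouad_ge1: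
  fixes F :: "real set" and L s C :: real
  assumes L: "L > 0" and F0: "0 \<in> F" and FL: "{0..<L} \<subseteq> F"
    and s: "s \<ge> 0" and C: "C > 0"
    and H: "\<forall>x\<in>F. \<forall>R r. 0 < r \<longrightarrow> r < R \<longrightarrow>
      (\<exists>A. finite A \<and> F \<inter> ball x R \<subseteq> (\<Union>a\<in>A. cball a r) \<and>
           real (card A) \<le> C * (R / r) powr s)"
  shows "s \<ge> 1"
proof (rule ccontr)
  assume "\<not> s \<ge> 1"
  then have s1: "s < 1" by simp
  define X where "X = (3 * (C + 1)) powr (1 / (1 - s))"
  define u where "u = max 2 X"
  have u2: "u \<ge> 2" and uX: "u \<ge> X" by (auto simp: u_def)
  have "u powr (1 - s) \<ge> X powr (1 - s)"
    using uX s1 by (intro powr_mono2) (auto simp: X_def)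
  also have "X powr (1 - s) = 3 * (C + 1)"
    unfolding X_def using s1 C by (simp add: powr_powr)
  finally have up: "u powr (1 - s) \<ge> 3 * (C + 1)" .
  have "u = u powr (1 - s) * u powr s" using u2 by (simp add: powr_add[symmetric])
  also have "\<dots> \<ge> 3 * (C + 1) * u powr s" using up by (intro mult_right_mono) auto
  finally have "u / 3 \<ge> C * u powr s + u powr s" by (simp add: algebra_simps)
  moreover have "u powr s \<ge> 1" using u2 s by (intro ge_one_powr_ge_zero) auto
  ultimately have key: "u / 3 - 1 \<ge> C * u powr s" by linarith
  define r where "r = L / u"
  have r0: "r > 0" and rL: "r < L" using L u2 by (auto simp: r_def field_simps)
  have Lr: "L / r = u" using L u2 by (simp add: r_def)
  obtain A where A: "finite A" "F \<inter> ball 0 L \<subseteq> (\<Union>a\<in>A. cball a r)"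
      "real (card A) \<le> C * (L / r) powr s"
    using H[rule_format, OF F0 r0 rL] by blast
  define M where "M = nat (floor (u / 3))"
  have M: "real M > u / 3 - 1" "real M \<le> u / 3" using u2 by (simp_all add: M_def) linarith+
  define t where "t = (\<lambda>k::nat. 3 * r * real k)"
  have tin: "t k \<in> (\<Union>a\<in>A. cball a r)" if "k < M" for k
  proof -
    have "real k + 1 \<le> real M" using that by simp
    then have "3 * r * (real k + 1) \<le> 3 * r * (u / 3)" using M r0 by (intro mult_left_mono) auto
    also have "\<dots> = L" using Lr r0 by (simp add: field_simps)
    finally have "t k < L" using r0 by (simp add: t_def algebra_simps)
    moreover have "t k \<ge> 0" using r0 by (simp add: t_def)
    ultimately have "t k \<in> F \<inter> ball 0 L" using FL by (auto simp: dist_real_def)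
    then show ?thesis using A(2) by blast
  qed
  define g where "g = (\<lambda>k. SOME a. a \<in> A \<and> t k \<in> cball a r)"
  have g: "g k \<in> A \<and> t k \<in> cball (g k) r" if kM: "k < M" for k
  proof -
    obtain a where "a \<in> A \<and> t k \<in> cball a r" using tin[OF kM] by blast
    then show ?thesis unfolding g_def by (rule someI)
  qed
  have "inj_on g {..<M}"
  proof (rule inj_onI)
    fix i j assume i: "i \<in> {..<M}" and j: "j \<in> {..<M}" and eq: "g i = g j"
    have gi: "dist (g j) (t i) \<le> r" using g[of i] i eq by (simp add: mem_cball)
    have gj: "dist (g j) (t j) \<le> r" using g[of j] j by (simp add: mem_cball)
    have "dist (t i) (t j) \<le> dist (g j) (t i) + dist (g j) (t j)" by (rule dist_triangle3)
    then have "dist (t i) (t j) \<le> 2 * r" using gi gj by linarith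
    show "i = j"
    proof (rule ccontr)
      assume "i \<noteq> j"
      then have "\<bar>real i - real j\<bar> \<ge> 1" by (cases "i < j") auto
      then have "3 * r * \<bar>real i - real j\<bar> \<ge> 3 * r" using r0 by simp
      moreover have "dist (t i) (t j) = 3 * r * \<bar>real i - real j\<bar>"
        using r0 by (simp add: t_def dist_real_def abs_mult right_diff_distrib[symmetric])
      ultimately show False using \<open>dist (t i) (t j) \<le> 2 * r\<close> r0 by linarith
    qed
  qed
  moreover have "g ` {..<M} \<subseteq> A" using g by auto
  ultimately have "card {..<M} \<le> card A" using A(1) by (metis card_inj_on_le)
  then have "real M \<le> real (card A)" by simp
  then have "real M \<le> C * u powr s" using A(3) Lr by simp
  then show False using key M by linarith
qed

lemma one_mem:
  fixes F :: "'a::euclidean_space set"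
  assumes H: "\<And>x R r. x \<in> F \<Longrightarrow> 0 < r \<Longrightarrow> r < R \<Longrightarrow>
     \<exists>A. finite A \<and> F \<inter> ball x R \<subseteq> (\<Union>a\<in>A. cball a r) \<and> real (card A) \<le> 2 * (R / r)"
  shows "(1::real) \<in> {s. s \<ge> 0 \<and> (\<exists>C>0. \<forall>x\<in>F. \<forall>R r. 0 < r \<longrightarrow> r < R \<longrightarrow>
      (\<exists>A. finite A \<and> F \<inter> ball x R \<subseteq> (\<Union>a\<in>A. cball a r) \<and>
           real (card A) \<le> C * (R / r) powr s))}"
proof -
  have "\<forall>x\<in>F. \<forall>R r. 0 < r \<longrightarrow> r < R \<longrightarrow>
    (\<exists>A. finite A \<and> F \<inter> ball x R \<subseteq> (\<Union>a\<in>A. cball a r) \<and>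
         real (card A) \<le> 2 * (R / r) powr 1)"
  proof (intro ballI allI impI)
    fix x R r assume "x \<in> F" "0 < (r::real)" "r < R"
    moreover have "(R / r) powr 1 = R / r" using \<open>0 < r\<close> \<open>r < R\<close> by simp
    ultimately show "\<exists>A. finite A \<and> F \<inter> ball x R \<subseteq> (\<Union>a\<in>A. cball a r) \<and>
         real (card A) \<le> 2 * (R / r) powr 1" using H by presburger
  qed
  then show ?thesis by (intro CollectI conjI) (auto intro!: exI[of _ 2])
qed

lemma assouad_eq1:
  fixes F :: "real set" and L :: real
  assumes L: "L > 0" and F0: "0 \<in> F" and FL: "{0..<L} \<subseteq> F"
  shows "assouad_dim F = 1"
  unfolding assouad_dim_def
proof (rule cInf_eq_minimum)
  show "(1::real) \<in> {s. s \<ge> 0 \<and> (\<exists>C>0. \<forall>x\<in>F. \<forall>R r. 0 < r \<longrightarrow> r < R \<longrightarrow>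
      (\<exists>A. finite A \<and> F \<inter> ball x R \<subseteq> (\<Union>a\<in>A. cball a r) \<and>
           real (card A) \<le> C * (R / r) powr s))}"
  proof (rule one_mem)
    fix x R r :: real assume "0 < r" "r < R"
    then obtain A where "finite A" "ball x R \<subseteq> (\<Union>a\<in>A. cball a r)" "real (card A) \<le> 2 * (R / r)"
      using cover_interval[OF \<open>0 < r\<close> \<open>r < R\<close>, of x] by (elim exE conjE)
    then show "\<exists>A. finite A \<and> F \<inter> ball x R \<subseteq> (\<Union>a\<in>A. cball a r) \<and> real (card A) \<le> 2 * (R / r)"
      by blast
  qed
next
  fix s assume "s \<in> {s. s \<ge> 0 \<and> (\<exists>C>0. \<forall>x\<in>F. \<forall>R r. 0 < r \<longrightarrow> r < R \<longrightarrow>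
      (\<exists>A. finite A \<and> F \<inter> ball x R \<subseteq> (\<Union>a\<in>A. cball a r) \<and>
           real (card A) \<le> C * (R / r) powr s))}"
  then obtain C where "s \<ge> 0" "C > 0" "\<forall>x\<in>F. \<forall>R r. 0 < r \<longrightarrow> r < R \<longrightarrow>
      (\<exists>A. finite A \<and> F \<inter> ball x R \<subseteq> (\<Union>a\<in>A. cball a r) \<and>
           real (card A) \<le> C * (R / r) powr s)" by blast
  then show "1 \<le> s" by (rule assouad_ge1[OF L F0 FL])
qed

lemma infdist_hd:
  fixes A B :: "real set" and y :: real
  assumes A: "compact A" "A \<noteq> {}" and B: "compact B" "B \<noteq> {}"
  shows "\<bar>infdist y A - infdist y B\<bar> \<le> hausdorff_dist A B"
proof -
  have one: "infdist y P \<le> infdist y Q + (SUP q\<in>Q. infdist q P)"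
    if P: "compact P" "P \<noteq> {}" and Q: "compact Q" "Q \<noteq> {}" for P Q :: "real set"
  proof -
    obtain q where q: "q \<in> Q" "infdist y Q = dist y q"
      using infdist_attains_inf[OF compact_imp_closed[OF Q(1)] Q(2)] by blast
    have "compact ((\<lambda>q. infdist q P) ` Q)"
      by (intro compact_continuous_image continuous_on_infdist continuous_on_id Q(1))
    then have "bdd_above ((\<lambda>q. infdist q P) ` Q)"
      by (intro bounded_imp_bdd_above compact_imp_bounded)
    then have "infdist q P \<le> (SUP q\<in>Q. infdist q P)" using q(1) by (rule cSUP_upper2) simp
    moreover have "infdist y P \<le> infdist q P + dist y q" by (rule infdist_triangle)
    ultimately show ?thesis using q(2) by linarith
  qed
  have "infdist y A \<le> infdist y B + hausdorff_dist A B"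
    using one[OF A B] unfolding hausdorff_dist_def by linarith
  moreover have "infdist y B \<le> infdist y A + hausdorff_dist A B"
    using one[OF B A] unfolding hausdorff_dist_def by linarith
  ultimately show ?thesis by linarith
qed

theorem theorem4p4:
  fixes a b :: real and f :: "real \<Rightarrow> real set"
  assumes "a \<le> b"
    and "\<forall>x\<in>{a..b}. f x \<noteq> {} \<and> compact (f x)"
    and "hausdorff_continuous_on {a..b} f"
    and "assouad_dim (graph_sv {a..b} f) > 1"
  shows "assouad_dim (l1_distance_set (graph_sv {a..b} f)) = 1"
proof (cases "a = b")
  case True
  have "assouad_dim (graph_sv {a..b} f) \<le> 1"
  proof (rule assouad_le1)
    fix p and R r :: real
    assume p: "p \<in> graph_sv {a..b} f" and r: "0 < r" "r < R"
    obtain A where A: "finite A" "ball (snd p) R \<subseteq> (\<Union>c\<in>A. cball c r)" "real (card A) \<le> 2 * (R / r)"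
      using cover_interval[OF r, of "snd p"] by (elim exE conjE)
    define A' where "A' = (\<lambda>t. (a, t)) ` A"
    have "finite A'" using A(1) by (simp add: A'_def)
    moreover have "real (card A') \<le> 2 * (R / r)"
      using A(3) card_image_le[OF A(1), of "\<lambda>t. (a, t)"] unfolding A'_def by linarith
    moreover have "graph_sv {a..b} f \<inter> ball p R \<subseteq> (\<Union>c\<in>A'. cball c r)"
    proof
      fix q assume q: "q \<in> graph_sv {a..b} f \<inter> ball p R"
      obtain x y where qxy: "q = (x, y)" by (cases q)
      have x: "x = a" using q True by (auto simp: qxy graph_sv_def)
      have "dist (snd p) (snd q) \<le> dist p q" by (rule dist_snd_le)
      then have "snd q \<in> ball (snd p) R" using q by auto
      then obtain c where c: "c \<in> A" "dist c y \<le> r" using A(2) qxy by auto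
      have "dist (a, c) q = dist c y" by (simp add: qxy x dist_Pair_Pair)
      then show "q \<in> (\<Union>c\<in>A'. cball c r)" using c unfolding A'_def by force
    qed
    ultimately show "\<exists>A. finite A \<and> graph_sv {a..b} f \<inter> ball p R \<subseteq> (\<Union>a\<in>A. cball a r) \<and>
        real (card A) \<le> 2 * (R / r)" by blast
  qed
  then show ?thesis using assms(4) by linarith
next
  case False
  then have ab: "a < b" using assms(1) by simp
  have fa: "f a \<noteq> {}" "compact (f a)" using assms(2) ab by auto
  then obtain y0 where y0: "y0 \<in> f a" by blast
  define G where "G = graph_sv {a..b} f"
  have aG: "(a, y0) \<in> G" using y0 ab by (simp add: G_def graph_sv_def)
  have D0: "0 \<in> l1_distance_set G"
    unfolding l1_distance_set_def using aG by force
  define h where "h = (\<lambda>x. infdist y0 (f x))"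
  have hc: "continuous_on {a..b} h"
    unfolding continuous_on_iff
  proof (intro ballI allI impI)
    fix x e :: real assume x: "x \<in> {a..b}" and e: "0 < e"
    obtain d where d: "d > 0" "\<forall>y\<in>{a..b}. \<bar>y - x\<bar> < d \<longrightarrow> hausdorff_dist (f y) (f x) < e"
      using assms(3) x e unfolding hausdorff_continuous_on_def by blast
    show "\<exists>d>0. \<forall>x'\<in>{a..b}. dist x' x < d \<longrightarrow> dist (h x') (h x) < e"
    proof (intro exI[of _ d] conjI ballI impI)
      fix x' assume x': "x' \<in> {a..b}" "dist x' x < d"
      have "\<bar>h x' - h x\<bar> \<le> hausdorff_dist (f x') (f x)"
        unfolding h_def using assms(2) x x'(1) by (intro infdist_hd) auto
      moreover have "hausdorff_dist (f x') (f x) < e" using d x' by (auto simp: dist_real_def)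
      ultimately show "dist (h x') (h x) < e" by (simp add: dist_real_def)
    qed (rule d(1))
  qed
  define g where "g = (\<lambda>x. (x - a) + h x)"
  have gc: "continuous_on {a..b} g" unfolding g_def
    by (intro continuous_on_add continuous_on_diff continuous_on_id continuous_on_const hc)
  have ga: "g a = 0" using y0 by (simp add: g_def h_def)
  have gb: "g b \<ge> b - a" by (simp add: g_def h_def infdist_nonneg)
  have DL: "{0..<b - a} \<subseteq> l1_distance_set G"
  proof
    fix t assume t: "t \<in> {0..<b - a}"
    obtain x where x: "x \<in> {a..b}" "g x = t"
      using IVT'[of g a t b] gc ga gb t ab by auto
    have fx: "f x \<noteq> {}" "compact (f x)" using assms(2) x(1) by auto
    obtain y where y: "y \<in> f x" "infdist y0 (f x) = dist y0 y"
      using infdist_attains_inf[OF compact_imp_closed[OF fx(2)] fx(1)] by blast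
    have xG: "(x, y) \<in> G" using x(1) y(1) by (simp add: G_def graph_sv_def)
    have "t = \<bar>x - a\<bar> + \<bar>y - y0\<bar>"
      using x y by (simp add: g_def h_def dist_real_def abs_minus_commute)
    then show "t \<in> l1_distance_set G"
      unfolding l1_distance_set_def using xG aG by blast
  qed
  show ?thesis using assouad_eq1[of "b - a" "l1_distance_set G"] ab D0 DL by (simp add: G_def)
qed

end
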